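(* Let $\alpha,\beta\in\mathbb{R}$ and consider the Sharma-Mittal entropy $S_{\alpha,\beta}$ on $\mathcal{P}_n$. Then $S_{\alpha,\beta}$ is Schur-concave if $\alpha\ge 0$, and Schur-convex if $\alpha<0$ (in the latter case on the set of probability vectors with all entries strictly positive).
   Context: Let $\mathcal{P}_n=\{\mathbf{p}=(p_1,\dots,p_n): p_i\ge 0,\ \sum_i p_i=1\}$. For $\mathbf{p},\mathbf{q}\in\mathcal{P}_n$ with components sorted in non-increasing order, $\mathbf{p}\preceq\mathbf{q}$ ($\mathbf{p}$ is majorized by $\mathbf{q}$) means $\sum_{i=1}^k p_i\le\sum_{i=1}^k q_i$ for $k=1,\dots,n$ (applied to the non-increasing rearrangements). A function $\phi$ is Schur-convex if $\mathbf{p}\preceq\mathbf{q}$ implies $\phi(\mathbf{p})\le\phi(\mathbf{q})$, and Schur-concave if $-\phi$ is Schur-convex. The Sharma-Mittal entropy is $S_{\alpha,\beta}(\mathbf{p})=\frac{1}{1-\beta}\left[\left(\sum_{i=1}^n p_i^\alpha\right)^{\frac{1-\beta}{1-\alpha}}-1\right]$, with the values at $\alpha=1$ and/or $\beta=1$ defined by the corresponding limits. When $\alpha<0$ it is assumed that all $p_i>0$, so that the entropy is well-defined. *)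

theory Defs
  imports Complex_Main
begin

definition prob_vectors :: "nat \<Rightarrow> real list set" where
  "prob_vectors n = {p. length p = n \<and> (\<forall>x\<in>set p. x \<ge> 0) \<and> sum_list p = 1}"

definition pos_prob_vectors :: "nat \<Rightarrow> real list set" where
  "pos_prob_vectors n = {p \<in> prob_vectors n. \<forall>x\<in>set p. x > 0}"

definition decr_sort :: "real list \<Rightarrow> real list" where
  "decr_sort p = rev (sort p)"

definition majorized :: "real list \<Rightarrow> real list \<Rightarrow> bool" where
  "majorized p q \<longleftrightarrow> length p = length q \<and>
     (\<forall>k. 1 \<le> k \<and> k \<le> length p \<longrightarrow>
        sum_list (take k (decr_sort p)) \<le> sum_list (take k (decr_sort q)))"

definition schur_convex_on :: "real list set \<Rightarrow> (real list \<Rightarrow> real) \<Rightarrow> bool" where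
  "schur_convex_on A \<phi> \<longleftrightarrow> (\<forall>p\<in>A. \<forall>q\<in>A. majorized p q \<longrightarrow> \<phi> p \<le> \<phi> q)"

definition schur_concave_on :: "real list set \<Rightarrow> (real list \<Rightarrow> real) \<Rightarrow> bool" where
  "schur_concave_on A \<phi> \<longleftrightarrow> schur_convex_on A (\<lambda>p. - \<phi> p)"

text \<open>Shannon entropy (with 0 ln 0 = 0, since ln 0 = 0 in Isabelle).\<close>
definition shannon :: "real list \<Rightarrow> real" where
  "shannon p = - sum_list (map (\<lambda>x. x * ln x) p)"

text \<open>Sharma-Mittal entropy; the cases alpha = 1 and/or beta = 1 are the limiting
  values: alpha=beta=1 Shannon, beta=1 Renyi, alpha=1 Gaussian entropy.
  Powers are taken with powr, so 0 powr a = 0 (sum over the support).\<close>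
definition sharma_mittal :: "real \<Rightarrow> real \<Rightarrow> real list \<Rightarrow> real" where
  "sharma_mittal \<alpha> \<beta> p =
    (if \<alpha> = 1 \<and> \<beta> = 1 then shannon p
     else if \<alpha> = 1 then (exp ((1 - \<beta>) * shannon p) - 1) / (1 - \<beta>)
     else if \<beta> = 1 then ln (sum_list (map (\<lambda>x. x powr \<alpha>) p)) / (1 - \<alpha>)
     else ((sum_list (map (\<lambda>x. x powr \<alpha>) p)) powr ((1 - \<beta>) / (1 - \<alpha>)) - 1) / (1 - \<beta>))"

end

theory Submission
  imports Defs "HOL-Analysis.Analysis"
begin

lemma abel_aux:
  fixes L :: "(real \<times> real) list"
  assumes "sorted_wrt (\<lambda>(a,d) (a',d'). d \<noteq> 0 \<longrightarrow> d' \<noteq> 0 \<longrightarrow> a'/d' \<le> a/d) L"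
    and "\<forall>(a,d)\<in>set L. d = 0 \<longrightarrow> a = 0"
    and "\<forall>k. 0 \<le> sum_list (take k (map snd L))"
    and "sum_list (map snd L) = 0"
  shows "0 \<le> sum_list (map fst L)"
  using assms
proof (induction "length L" arbitrary: L rule: less_induct)
  case less
  show ?case
  proof (cases L)
    case Nil then show ?thesis by simp
  next
    case (Cons x R)
    obtain a1 d1 where x: "x = (a1,d1)" by fastforce
    show ?thesis
    proof (cases R)
      case Nil
      then show ?thesis using less.prems Cons x by auto
    next
      case (Cons y rest)
      obtain a2 d2 where y: "y = (a2,d2)" by fastforce
      have L: "L = (a1,d1) # (a2,d2) # rest" using Cons \<open>L = x # R\<close> x y by simp
      have d1: "0 \<le> d1" 
      proof -
        have "0 \<le> sum_list (take 1 (map snd L))" using less.prems(3) by blast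
        then show ?thesis using L by simp
      qed
      show ?thesis
      proof (cases "d1 = 0")
        case True
        have a1: "a1 = 0" using less.prems(2) L True by auto
        have "0 \<le> sum_list (map fst ((a2,d2) # rest))"
        proof (rule less.hyps)
          show "length ((a2, d2) # rest) < length L" using L by simp
          show "sorted_wrt (\<lambda>(a,d) (a',d'). d \<noteq> 0 \<longrightarrow> d' \<noteq> 0 \<longrightarrow> a'/d' \<le> a/d) ((a2, d2) # rest)"
            using less.prems(1) L by simp
          show "\<forall>(a,d)\<in>set ((a2, d2) # rest). d = 0 \<longrightarrow> a = 0" using less.prems(2) L by auto
          show "\<forall>k. 0 \<le> sum_list (take k (map snd ((a2, d2) # rest)))"
          proof
            fix k
            have "sum_list (take k (map snd ((a2, d2) # rest))) = sum_list (take (Suc k) (map snd L))"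
              using L True by simp
            then show "0 \<le> sum_list (take k (map snd ((a2, d2) # rest)))" using less.prems(3) by simp
          qed
          show "sum_list (map snd ((a2, d2) # rest)) = 0" using less.prems(4) L True by simp
        qed
        then show ?thesis using L a1 by simp
      next
        case False
        then have d1p: "0 < d1" using d1 by simp
        define m where "m = (if d2 = 0 then (a1 + a2, d1 + d2) else (a2/d2*(d1+d2), d1+d2))"
        have msnd: "snd m = d1 + d2" by (simp add: m_def)
        have mfst: "fst m \<le> a1 + a2"
        proof (cases "d2 = 0")
          case True then show ?thesis by (simp add: m_def)
        next
          case F2: False
          have "a2/d2 \<le> a1/d1" using less.prems(1) L False F2 by simp
          then have "a2/d2 * d1 \<le> a1/d1 * d1" using d1p by (intro mult_right_mono) auto
          moreover have "a1/d1*d1 = a1" using d1p by simp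
          ultimately have "a2/d2 * d1 \<le> a1" by linarith
          moreover have "a2/d2*d2 = a2" using F2 by simp
          ultimately show ?thesis using F2 by (simp add: m_def distrib_left)
        qed
        have "0 \<le> sum_list (map fst (m # rest))"
        proof (rule less.hyps)
          show "length (m # rest) < length L" using L by simp
          show "sorted_wrt (\<lambda>(a,d) (a',d'). d \<noteq> 0 \<longrightarrow> d' \<noteq> 0 \<longrightarrow> a'/d' \<le> a/d) (m # rest)"
          proof -
            have s1: "\<forall>z\<in>set rest. (\<lambda>(a,d) (a',d'). d \<noteq> 0 \<longrightarrow> d' \<noteq> 0 \<longrightarrow> a'/d' \<le> a/d) (a1,d1) z"
              and s2: "\<forall>z\<in>set rest. (\<lambda>(a,d) (a',d'). d \<noteq> 0 \<longrightarrow> d' \<noteq> 0 \<longrightarrow> a'/d' \<le> a/d) (a2,d2) z"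
              and s3: "sorted_wrt (\<lambda>(a,d) (a',d'). d \<noteq> 0 \<longrightarrow> d' \<noteq> 0 \<longrightarrow> a'/d' \<le> a/d) rest"
              using less.prems(1) L by auto
            have "\<forall>z\<in>set rest. (\<lambda>(a,d) (a',d'). d \<noteq> 0 \<longrightarrow> d' \<noteq> 0 \<longrightarrow> a'/d' \<le> a/d) m z"
            proof
              fix z assume z: "z \<in> set rest"
              obtain a3 d3 where z3: "z = (a3,d3)" by fastforce
              show "(\<lambda>(a,d) (a',d'). d \<noteq> 0 \<longrightarrow> d' \<noteq> 0 \<longrightarrow> a'/d' \<le> a/d) m z"
              proof (cases "d2 = 0")
                case True
                then have "a2 = 0" using less.prems(2) L by auto
                then show ?thesis using s1 z z3 True by (auto simp: m_def)
              next
                case F2: False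
                then show ?thesis using s2 z z3 by (auto simp: m_def)
              qed
            qed
            then show ?thesis using s3 by simp
          qed
          show "\<forall>(a,d)\<in>set (m # rest). d = 0 \<longrightarrow> a = 0" using less.prems(2) L by (auto simp: m_def)
          show "\<forall>k. 0 \<le> sum_list (take k (map snd (m # rest)))"
          proof
            fix k
            show "0 \<le> sum_list (take k (map snd (m # rest)))"
            proof (cases k)
              case 0 then show ?thesis by simp
            next
              case (Suc j)
              have "sum_list (take k (map snd (m # rest))) = sum_list (take (Suc k) (map snd L))"
                using L Suc msnd by simp
              then show ?thesis using less.prems(3) by simp
            qed
          qed
          show "sum_list (map snd (m # rest)) = 0" using less.prems(4) L msnd by simp
        qed
        then show ?thesis using L mfst by simp
      qed
    qed
  qed
qed

definition slope :: "(real \<Rightarrow> real) \<Rightarrow> real \<Rightarrow> real \<Rightarrow> real" where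
  "slope f u v = (f u - f v) / (u - v)"

lemma slope_sym: "slope f u v = slope f v u"
proof -
  have "(f u - f v) / (u - v) = (-(f v - f u)) / (-(v - u))" by simp
  also have "\<dots> = (f v - f u) / (v - u)" by (rule minus_divide_divide)
  finally show ?thesis unfolding slope_def .
qed

lemma slope_alt: "slope f u v = (f v - f u) / (v - u)"
  using slope_sym[of f u v] unfolding slope_def .

lemma slope_le1:
  assumes "convex_on I f" "x \<in> I" "y \<in> I" "x < t" "t < y"
  shows "slope f x t \<le> slope f x y"
  unfolding slope_def by (rule convex_on_slope_le(1)[OF assms])

lemma slope_le2:
  assumes "convex_on I f" "x \<in> I" "y \<in> I" "x < t" "t < y"
  shows "slope f x y \<le> slope f t y"
  unfolding slope_def by (rule convex_on_slope_le(2)[OF assms])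

lemma slope_mono1:
  assumes f: "convex_on I f" and I: "p \<in> I" "a \<in> I" "b \<in> I"
    and ab: "a \<le> b" "a \<noteq> p" "b \<noteq> p"
  shows "slope f p a \<le> slope f p b"
proof -
  consider "a = b" | "p < a" "a < b" | "a < p" "p < b" | "a < b" "b < p" using ab by linarith
  then show ?thesis
  proof cases
    case 1 then show ?thesis by simp
  next
    case 2 then show ?thesis using slope_le1[OF f I(1) I(3)] by blast
  next
    case 3
    have "slope f a p \<le> slope f a b" using slope_le1[OF f I(2) I(3)] 3 by blast
    moreover have "slope f a b \<le> slope f p b" using slope_le2[OF f I(2) I(3)] 3 by blast
    ultimately show ?thesis using slope_sym[of f p a] by linarith
  next
    case 4
    have "slope f a p \<le> slope f b p" using slope_le2[OF f I(2) I(1)] 4 by blast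
    then show ?thesis using slope_sym[of f p a] slope_sym[of f p b] by linarith
  qed
qed

lemma slope_mono2:
  assumes f: "convex_on I f" and I: "a \<in> I" "b \<in> I" "a' \<in> I" "b' \<in> I"
    and le: "a \<le> a'" "b \<le> b'" and ne: "a \<noteq> b" "a' \<noteq> b'"
  shows "slope f a b \<le> slope f a' b'"
proof (cases "a < b")
  case True
  have "slope f a b \<le> slope f a b'" using slope_mono1[OF f I(1) I(2) I(4)] le ne True by simp
  also have "\<dots> = slope f b' a" by (rule slope_sym)
  also have "\<dots> \<le> slope f b' a'" using slope_mono1[OF f I(4) I(1) I(3)] le ne True by simp
  also have "\<dots> = slope f a' b'" by (rule slope_sym)
  finally show ?thesis .
next
  case False
  then have ba: "b < a" using ne by simp
  have "slope f a b = slope f b a" by (rule slope_sym)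
  also have "\<dots> \<le> slope f b a'" using slope_mono1[OF f I(2) I(1) I(3)] le ne ba by simp
  also have "\<dots> = slope f a' b" by (rule slope_sym)
  also have "\<dots> \<le> slope f a' b'" using slope_mono1[OF f I(3) I(2) I(4)] le ne ba by simp
  finally show ?thesis .
qed

lemma sum_zip_diff:
  "length x = length y \<Longrightarrow>
   sum_list (map (\<lambda>(u,v). (h::'a\<Rightarrow>real) v - h u) (zip x y)) = sum_list (map h y) - sum_list (map h x)"
  by (induction x y rule: list_induct2) auto

lemma karamata:
  fixes f :: "real \<Rightarrow> real"
  assumes f: "convex_on I f" and sx: "set x \<subseteq> I" and sy: "set y \<subseteq> I"
    and len: "length x = length y"
    and sortx: "sorted_wrt (\<ge>) x" and sorty: "sorted_wrt (\<ge>) y"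
    and pre: "\<forall>k \<le> length x. sum_list (take k x) \<le> sum_list (take k y)"
    and tot: "sum_list x = sum_list y"
  shows "sum_list (map f x) \<le> sum_list (map f y)"
proof -
  define L where "L = map (\<lambda>(u,v). (f v - f u, v - u)) (zip x y)"
  have fstL: "map fst L = map (\<lambda>(u,v). f v - f u) (zip x y)" unfolding L_def by (auto simp: case_prod_beta)
  have sndL: "map snd L = map (\<lambda>(u,v). id v - id u) (zip x y)" unfolding L_def by (auto simp: case_prod_beta)
  have "0 \<le> sum_list (map fst L)"
  proof (rule abel_aux)
    show "sorted_wrt (\<lambda>(a,d) (a',d'). d \<noteq> 0 \<longrightarrow> d' \<noteq> 0 \<longrightarrow> a'/d' \<le> a/d) L"
      unfolding sorted_wrt_iff_nth_less
    proof (intro allI impI)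
      fix i j assume ij: "i < j" "j < length L"
      have lenL: "length L = length x" using len by (simp add: L_def)
      have Li: "L ! i = (f (y!i) - f (x!i), y!i - x!i)" using ij lenL len by (simp add: L_def)
      have Lj: "L ! j = (f (y!j) - f (x!j), y!j - x!j)" using ij lenL len by (simp add: L_def)
      have xij: "x!j \<le> x!i" using sortx ij lenL by (simp add: sorted_wrt_iff_nth_less)
      have yij: "y!j \<le> y!i" using sorty ij lenL len by (simp add: sorted_wrt_iff_nth_less)
      have ilt: "i < length x" "j < length x" "i < length y" "j < length y" using ij lenL len by auto
      have mem: "x!i \<in> I" "x!j \<in> I" "y!i \<in> I" "y!j \<in> I"
        using nth_mem[OF ilt(1)] nth_mem[OF ilt(2)] nth_mem[OF ilt(3)] nth_mem[OF ilt(4)] sx sy by blast+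
      show "(\<lambda>(a,d) (a',d'). d \<noteq> 0 \<longrightarrow> d' \<noteq> 0 \<longrightarrow> a'/d' \<le> a/d) (L ! i) (L ! j)"
      proof (simp only: Li Lj split: prod.split, intro allI impI, clarify)
        assume "y!i - x!i \<noteq> 0" "y!j - x!j \<noteq> 0"
        then have "x!j \<noteq> y!j" "x!i \<noteq> y!i" by auto
        then have "slope f (x!j) (y!j) \<le> slope f (x!i) (y!i)"
          by (rule slope_mono2[OF f mem(2) mem(4) mem(1) mem(3) xij yij])
        then show "(f (y!j) - f (x!j)) / (y!j - x!j) \<le> (f (y!i) - f (x!i)) / (y!i - x!i)"
          by (simp only: slope_alt)
      qed
    qed
    show "\<forall>(a,d)\<in>set L. d = 0 \<longrightarrow> a = 0" unfolding L_def by auto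
    show "\<forall>k. 0 \<le> sum_list (take k (map snd L))"
    proof
      fix k
      have e: "take k (map snd L) = map (\<lambda>(u,v). id v - id u) (zip (take k x) (take k y))"
        unfolding sndL by (simp add: take_map take_zip)
      have "sum_list (take k (map snd L)) = sum_list (take k y) - sum_list (take k x)"
        unfolding e using len by (subst sum_zip_diff) auto
      moreover have "sum_list (take k x) \<le> sum_list (take k y)"
      proof (cases "k \<le> length x")
        case True then show ?thesis using pre by simp
      next
        case False then show ?thesis using tot len by simp
      qed
      ultimately show "0 \<le> sum_list (take k (map snd L))" by simp
    qed
    show "sum_list (map snd L) = 0" unfolding sndL using len tot by (subst sum_zip_diff) auto
  qed
  then show ?thesis unfolding fstL using len by (subst (asm) sum_zip_diff) auto
qed


lemma convex_from_open:
  fixes f :: "real \<Rightarrow> real"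
  assumes c: "convex_on {0<..} f"
    and b: "\<And>x t. 0 < x \<Longrightarrow> 0 < t \<Longrightarrow> t < 1 \<Longrightarrow> f (t*x) \<le> t * f x + (1-t) * f 0"
  shows "convex_on {0..} f"
proof (rule convex_on_linorderI)
  show "convex {0::real..}" by simp
  fix t x y :: real
  assume t: "0 < t" "t < 1" and xy: "x \<in> {0..}" "y \<in> {0..}" "x < y"
  show "f ((1 - t) *\<^sub>R x + t *\<^sub>R y) \<le> (1 - t) * f x + t * f y"
  proof (cases "x = 0")
    case True
    then have "y > 0" using xy by simp
    then show ?thesis using b[of y t] t True by (simp add: algebra_simps)
  next
    case False
    then have "x \<in> {0<..}" "y \<in> {0<..}" using xy by auto
    then show ?thesis using convex_onD[OF c, of t x y] t by simp
  qed
qed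

lemma conv_negpow:
  assumes "0 \<le> a" "a \<le> 1"
  shows "convex_on {0..} (\<lambda>x::real. -(x powr a))"
proof (rule convex_from_open)
  show "convex_on {0<..} (\<lambda>x::real. -(x powr a))"
  proof (rule f''_ge0_imp_convex[where f'="\<lambda>x. -(a * x powr (a-1))" and f''="\<lambda>x. -(a * ((a-1) * x powr (a-1-1)))"])
    show "convex {0::real<..}" by simp
    fix x :: real assume x: "x \<in> {0<..}"
    then show "((\<lambda>x. -(x powr a)) has_real_derivative -(a * x powr (a-1))) (at x)"
      by (intro DERIV_minus has_real_derivative_powr) simp
    show "((\<lambda>x. -(a * x powr (a-1))) has_real_derivative -(a * ((a-1) * x powr (a-1-1)))) (at x)"
      using x by (intro DERIV_minus DERIV_cmult has_real_derivative_powr) simp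
    have "0 \<le> a * ((1-a) * x powr (a-1-1))" using assms by (simp add: powr_ge_zero)
    then show "0 \<le> -(a * ((a-1) * x powr (a-1-1)))" by (simp add: algebra_simps)
  qed
  fix x t :: real assume x: "0 < x" and t: "0 < t" "t < 1"
  have "t powr 1 \<le> t powr a" using powr_mono'[of a 1 t] assms t by simp
  then have "t \<le> t powr a" using t by simp
  then have "t * x powr a \<le> t powr a * x powr a" by (simp add: mult_right_mono powr_ge_zero)
  also have "\<dots> = (t*x) powr a" using t x by (simp add: powr_mult)
  finally show "-((t*x) powr a) \<le> t * -(x powr a) + (1-t) * -(0 powr a)" by simp
qed

lemma conv_pow:
  assumes "1 \<le> a"
  shows "convex_on {0..} (\<lambda>x::real. x powr a)"
proof (rule convex_from_open)
  show "convex_on {0<..} (\<lambda>x::real. x powr a)" using powr_convex assms by simp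
  fix x t :: real assume x: "0 < x" and t: "0 < t" "t < 1"
  have "t powr a \<le> t powr 1" using powr_mono'[of 1 a t] assms t by simp
  then have "t powr a \<le> t" using t by simp
  then have "t powr a * x powr a \<le> t * x powr a" by (simp add: mult_right_mono powr_ge_zero)
  moreover have "(t*x) powr a = t powr a * x powr a" using t x by (simp add: powr_mult)
  ultimately show "(t*x) powr a \<le> t * (x powr a) + (1-t) * (0 powr a)" by simp
qed

lemma conv_neg:
  assumes "a \<le> 0"
  shows "convex_on {0<..} (\<lambda>x::real. x powr a)"
proof (rule f''_ge0_imp_convex[where f'="\<lambda>x. a * x powr (a-1)" and f''="\<lambda>x. a * ((a-1) * x powr (a-1-1))"])
  show "convex {0::real<..}" by simp
  fix x :: real assume x: "x \<in> {0<..}"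
  then show "((\<lambda>x. x powr a) has_real_derivative a * x powr (a-1)) (at x)"
    by (intro has_real_derivative_powr) simp
  show "((\<lambda>x. a * x powr (a-1)) has_real_derivative a * ((a-1) * x powr (a-1-1))) (at x)"
    using x by (intro DERIV_cmult has_real_derivative_powr) simp
  have "0 \<le> (-a) * ((1-a) * x powr (a-1-1))" using assms by (intro mult_nonneg_nonneg) (auto simp: powr_ge_zero)
  then show "0 \<le> a * ((a-1) * x powr (a-1-1))" by (simp add: algebra_simps)
qed

lemma conv_xlnx: "convex_on {0..} (\<lambda>x::real. x * ln x)"
proof (rule convex_from_open)
  show "convex_on {0<..} (\<lambda>x::real. x * ln x)"
  proof (rule f''_ge0_imp_convex[where f'="\<lambda>x. ln x + 1" and f''="\<lambda>x. 1 / x"])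
    show "convex {0::real<..}" by simp
    fix x :: real assume x: "x \<in> {0<..}"
    then show "((\<lambda>x. x * ln x) has_real_derivative ln x + 1) (at x)"
      by (auto intro!: derivative_eq_intros)
    show "((\<lambda>x. ln x + 1) has_real_derivative 1 / x) (at x)"
      using x by (auto intro!: derivative_eq_intros)
    show "0 \<le> 1 / x" using x by simp
  qed
  fix x t :: real assume x: "0 < x" and t: "0 < t" "t < 1"
  have "ln t \<le> 0" using t by simp
  then have "t * x * ln t \<le> 0" using t x by (simp add: mult_nonneg_nonpos)
  moreover have "t * x * ln (t * x) = t * x * ln t + t * (x * ln x)" using t x by (simp add: ln_mult algebra_simps)
  ultimately show "t * x * ln (t * x) \<le> t * (x * ln x) + (1 - t) * (0 * ln 0)" by simp
qed

lemma decr_sort_props: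
  "sorted_wrt (\<ge>) (decr_sort p)" "length (decr_sort p) = length p" "set (decr_sort p) = set p"
  "sum_list (map f (decr_sort p)) = sum_list (map (f::real\<Rightarrow>real) p)"
proof -
  show "sorted_wrt (\<ge>) (decr_sort p)" unfolding decr_sort_def
    using sorted_sort[of p] by (simp add: sorted_wrt_rev)
  show "length (decr_sort p) = length p" "set (decr_sort p) = set p" unfolding decr_sort_def by simp_all
  show "sum_list (map f (decr_sort p)) = sum_list (map f p)" unfolding decr_sort_def
  proof -
    have "mset (map f (rev (sort p))) = mset (map f p)" by simp
    then have "sum_mset (mset (map f (rev (sort p)))) = sum_mset (mset (map f p))" by simp
    then show "sum_list (map f (rev (sort p))) = sum_list (map f p)" by (simp only: sum_mset_sum_list)
  qed
qed

lemma schur_sum: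
  fixes f :: "real \<Rightarrow> real"
  assumes f: "convex_on I f" and sp: "set p \<subseteq> I" and sq: "set q \<subseteq> I"
    and m: "majorized p q" and tot: "sum_list p = sum_list q"
  shows "sum_list (map f p) \<le> sum_list (map f q)"
proof -
  have "sum_list (map f (decr_sort p)) \<le> sum_list (map f (decr_sort q))"
  proof (rule karamata[OF f])
    show "set (decr_sort p) \<subseteq> I" "set (decr_sort q) \<subseteq> I" using sp sq decr_sort_props(3) by auto
    show "length (decr_sort p) = length (decr_sort q)" using m decr_sort_props(2) by (simp add: majorized_def)
    show "sorted_wrt (\<ge>) (decr_sort p)" "sorted_wrt (\<ge>) (decr_sort q)" by (rule decr_sort_props(1))+
    show "\<forall>k \<le> length (decr_sort p). sum_list (take k (decr_sort p)) \<le> sum_list (take k (decr_sort q))"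
    proof (intro allI impI)
      fix k assume k: "k \<le> length (decr_sort p)"
      show "sum_list (take k (decr_sort p)) \<le> sum_list (take k (decr_sort q))"
      proof (cases "k = 0")
        case True then show ?thesis by simp
      next
        case False then show ?thesis using m k decr_sort_props(2) by (simp add: majorized_def)
      qed
    qed
    show "sum_list (decr_sort p) = sum_list (decr_sort q)"
      using decr_sort_props(4)[of id p] decr_sort_props(4)[of id q] tot by simp
  qed
  then show ?thesis by (simp add: decr_sort_props(4))
qed


definition SM :: "real \<Rightarrow> real \<Rightarrow> real \<Rightarrow> real" where
  "SM a b s = (if b = 1 then ln s / (1 - a) else (s powr ((1 - b) / (1 - a)) - 1) / (1 - b))"

lemma sm_eq: "a \<noteq> 1 \<Longrightarrow> sharma_mittal a b p = SM a b (sum_list (map (\<lambda>x. x powr a) p))"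
  by (simp add: sharma_mittal_def SM_def)

lemma SM_mono_lt1:
  assumes "0 < s1" "s1 \<le> s2" "a < 1"
  shows "SM a b s1 \<le> SM a b s2"
proof -
  consider "b = 1" | "b < 1" | "b > 1" by linarith
  then show ?thesis
  proof cases
    case 1
    have "ln s1 \<le> ln s2" using assms by simp
    then show ?thesis using 1 assms by (simp add: SM_def divide_right_mono)
  next
    case 2
    have "0 \<le> (1 - b) / (1 - a)" using 2 assms by simp
    then have "s1 powr ((1 - b) / (1 - a)) \<le> s2 powr ((1 - b) / (1 - a))"
      using assms by (intro powr_mono2) auto
    then show ?thesis using 2 by (simp add: SM_def divide_right_mono)
  next
    case 3
    have "(1 - b) / (1 - a) \<le> 0" using 3 assms by (simp add: divide_nonpos_pos)
    then have "s2 powr ((1 - b) / (1 - a)) \<le> s1 powr ((1 - b) / (1 - a))"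
      using assms by (intro powr_mono2') auto
    then show ?thesis using 3 by (simp add: SM_def divide_right_mono_neg)
  qed
qed

lemma SM_mono_gt1:
  assumes "0 < s1" "s1 \<le> s2" "a > 1"
  shows "SM a b s2 \<le> SM a b s1"
proof -
  consider "b = 1" | "b < 1" | "b > 1" by linarith
  then show ?thesis
  proof cases
    case 1
    have "ln s1 \<le> ln s2" using assms by simp
    then show ?thesis using 1 assms by (simp add: SM_def divide_right_mono_neg)
  next
    case 2
    have "(1 - b) / (1 - a) \<le> 0" using 2 assms by (simp add: divide_nonneg_neg)
    then have "s2 powr ((1 - b) / (1 - a)) \<le> s1 powr ((1 - b) / (1 - a))"
      using assms by (intro powr_mono2') auto
    then show ?thesis using 2 by (simp add: SM_def divide_right_mono)
  next
    case 3
    have "0 \<le> (1 - b) / (1 - a)" using 3 assms by (simp add: divide_nonpos_neg)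
    then have "s1 powr ((1 - b) / (1 - a)) \<le> s2 powr ((1 - b) / (1 - a))"
      using assms by (intro powr_mono2) auto
    then show ?thesis using 3 by (simp add: SM_def divide_right_mono_neg)
  qed
qed

lemma powsum_pos:
  assumes "p \<in> prob_vectors n"
  shows "0 < sum_list (map (\<lambda>x. x powr a) p)"
proof -
  have nn: "\<forall>x\<in>set p. 0 \<le> x" "sum_list p = 1" using assms by (auto simp: prob_vectors_def)
  have "\<exists>x\<in>set p. x \<noteq> 0"
  proof (rule ccontr)
    assume "\<not> (\<exists>x\<in>set p. x \<noteq> 0)"
    then have "sum_list p = 0" using nn(1) by (simp add: sum_list_nonneg_eq_0_iff)
    then show False using nn(2) by simp
  qed
  then obtain x where x: "x \<in> set p" "x \<noteq> 0" by blast
  then have "0 < x powr a" using nn(1) by simp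
  moreover have "x powr a \<le> sum_list (map (\<lambda>x. x powr a) p)"
    using x by (intro member_le_sum_list) (auto simp: powr_ge_zero)
  ultimately show ?thesis by linarith
qed

lemma sum_neg_map: "sum_list (map (\<lambda>x. - (f x)) xs) = - sum_list (map (f::real\<Rightarrow>real) xs)"
  by (induction xs) auto

theorem lemma1:
  fixes \<alpha> \<beta> :: real and n :: nat
  shows "(\<alpha> \<ge> 0 \<longrightarrow> schur_concave_on (prob_vectors n) (sharma_mittal \<alpha> \<beta>)) \<and>
         (\<alpha> < 0 \<longrightarrow> schur_convex_on (pos_prob_vectors n) (sharma_mittal \<alpha> \<beta>))"
proof (intro conjI impI)
  assume a0: "\<alpha> \<ge> 0"
  show "schur_concave_on (prob_vectors n) (sharma_mittal \<alpha> \<beta>)"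
    unfolding schur_concave_on_def schur_convex_on_def
  proof (intro ballI impI)
    fix p q assume p: "p \<in> prob_vectors n" and q: "q \<in> prob_vectors n" and m: "majorized p q"
    have sp: "set p \<subseteq> {0..}" and sq: "set q \<subseteq> {0..}" using p q by (auto simp: prob_vectors_def)
    have tot: "sum_list p = sum_list q" using p q by (simp add: prob_vectors_def)
    have "sharma_mittal \<alpha> \<beta> q \<le> sharma_mittal \<alpha> \<beta> p"
    proof (cases "\<alpha> = 1")
      case True
      have "sum_list (map (\<lambda>x. x * ln x) p) \<le> sum_list (map (\<lambda>x. x * ln x) q)"
        by (rule schur_sum[OF conv_xlnx sp sq m tot])
      then have h: "shannon q \<le> shannon p" by (simp add: shannon_def)
      consider "\<beta> = 1" | "\<beta> < 1" | "\<beta> > 1" by linarith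
      then show ?thesis
      proof cases
        case 1 then show ?thesis using True h by (simp add: sharma_mittal_def)
      next
        case 2
        have "exp ((1 - \<beta>) * shannon q) \<le> exp ((1 - \<beta>) * shannon p)"
          using 2 h by (simp add: mult_left_mono)
        then show ?thesis using True 2 by (simp add: sharma_mittal_def divide_right_mono)
      next
        case 3
        have "(1 - \<beta>) * shannon p \<le> (1 - \<beta>) * shannon q"
          using 3 h by (intro mult_left_mono_neg) auto
        then have "exp ((1 - \<beta>) * shannon p) \<le> exp ((1 - \<beta>) * shannon q)" by simp
        then show ?thesis using True 3 by (simp add: sharma_mittal_def divide_right_mono_neg)
      qed
    next
      case False
      show ?thesis
      proof (cases "\<alpha> < 1")
        case True
        have "sum_list (map (\<lambda>x. -(x powr \<alpha>)) p) \<le> sum_list (map (\<lambda>x. -(x powr \<alpha>)) q)"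
          by (rule schur_sum[OF conv_negpow[of \<alpha>] sp sq m tot]) (use a0 True in auto)
        then have "sum_list (map (\<lambda>x. x powr \<alpha>) q) \<le> sum_list (map (\<lambda>x. x powr \<alpha>) p)"
          by (simp add: sum_neg_map)
        then show ?thesis using SM_mono_lt1[OF powsum_pos[OF q] _ True] False by (simp add: sm_eq)
      next
        case F2: False
        then have a1: "\<alpha> > 1" using False by simp
        have "sum_list (map (\<lambda>x. x powr \<alpha>) p) \<le> sum_list (map (\<lambda>x. x powr \<alpha>) q)"
          by (rule schur_sum[OF conv_pow[of \<alpha>] sp sq m tot]) (use a1 in auto)
        then show ?thesis using SM_mono_gt1[OF powsum_pos[OF p] _ a1] False by (simp add: sm_eq)
      qed
    qed
    then show "- sharma_mittal \<alpha> \<beta> p \<le> - sharma_mittal \<alpha> \<beta> q" by simp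
  qed
next
  assume a0: "\<alpha> < 0"
  show "schur_convex_on (pos_prob_vectors n) (sharma_mittal \<alpha> \<beta>)"
    unfolding schur_convex_on_def
  proof (intro ballI impI)
    fix p q assume p: "p \<in> pos_prob_vectors n" and q: "q \<in> pos_prob_vectors n" and m: "majorized p q"
    have sp: "set p \<subseteq> {0<..}" and sq: "set q \<subseteq> {0<..}" using p q by (auto simp: pos_prob_vectors_def)
    have tot: "sum_list p = sum_list q" using p q by (simp add: pos_prob_vectors_def prob_vectors_def)
    have pp: "p \<in> prob_vectors n" using p by (simp add: pos_prob_vectors_def)
    have le: "sum_list (map (\<lambda>x. x powr \<alpha>) p) \<le> sum_list (map (\<lambda>x. x powr \<alpha>) q)"
      by (rule schur_sum[OF conv_neg[of \<alpha>] sp sq m tot]) (use a0 in auto)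
    have a1: "\<alpha> < 1" "\<alpha> \<noteq> 1" using a0 by auto
    show "sharma_mittal \<alpha> \<beta> p \<le> sharma_mittal \<alpha> \<beta> q"
      using SM_mono_lt1[OF powsum_pos[OF pp] le a1(1), of \<beta>] sm_eq[OF a1(2)] by simp
  qed
qed

end
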